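(* Let $\ell\ge 2$. There exist constants $C=C(\ell)$ and $c=c(\ell)>0$ such that the following holds. If $G$ is an $n$-vertex clean graph with average degree $d\ge Cn^{1/2}$, then the total weight of copies of $P_{\ell+1}^{\square}$ in $G$ is at least $c\,n\,d^{\ell+1}$.
   Context: An $n$-vertex graph $H$ with average degree $d$ is clean if for every edge $uv\in E(H)$, $u$ has at least $d/16$ neighbours $w$ in $H$ with $d_H(v,w)\ge \frac{d^2}{128n}$, where $d_H(v,w)$ is the number of common neighbours of $v,w$. A copy of $P_{\ell+1}^{\square}$ in $G$ is a tuple of distinct vertices $(x_0,\dots,x_\ell,y_0,\dots,y_\ell)$ with $x_iy_i\in E(G)$ for $0\le i\le\ell$ and $x_{i-1}x_i,\ y_{i-1}y_i\in E(G)$ for $1\le i\le \ell$. Its weight is $1/\prod_{i=1}^{\ell}\max\big(d_G(x_{i-1},y_i),\frac{d^2}{n}\big)$. *)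

theory Defs
  imports Complex_Main
begin

definition simple_graph :: "nat set \<Rightarrow> (nat \<Rightarrow> nat \<Rightarrow> bool) \<Rightarrow> bool" where
  "simple_graph V E \<longleftrightarrow> finite V \<and> (\<forall>u v. E u v \<longrightarrow> E v u) \<and> (\<forall>u. \<not> E u u)
     \<and> (\<forall>u v. E u v \<longrightarrow> u \<in> V \<and> v \<in> V)"

definition nbhd :: "nat set \<Rightarrow> (nat \<Rightarrow> nat \<Rightarrow> bool) \<Rightarrow> nat \<Rightarrow> nat set" where
  "nbhd V E u = {w \<in> V. E u w}"

definition degree :: "nat set \<Rightarrow> (nat \<Rightarrow> nat \<Rightarrow> bool) \<Rightarrow> nat \<Rightarrow> nat" where
  "degree V E u = card (nbhd V E u)"

definition codeg :: "nat set \<Rightarrow> (nat \<Rightarrow> nat \<Rightarrow> bool) \<Rightarrow> nat \<Rightarrow> nat \<Rightarrow> nat" where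
  "codeg V E v w = card (nbhd V E v \<inter> nbhd V E w)"

definition avg_degree :: "nat set \<Rightarrow> (nat \<Rightarrow> nat \<Rightarrow> bool) \<Rightarrow> real" where
  "avg_degree V E = (\<Sum>u\<in>V. real (degree V E u)) / real (card V)"

definition clean :: "nat set \<Rightarrow> (nat \<Rightarrow> nat \<Rightarrow> bool) \<Rightarrow> bool" where
  "clean V E \<longleftrightarrow> (\<forall>u v. E u v \<longrightarrow>
     real (card {w \<in> nbhd V E u. real (codeg V E v w) \<ge> (avg_degree V E)^2 / (128 * real (card V))})
       \<ge> avg_degree V E / 16)"

text \<open>Copies of the square of a path, encoded as pairs of lists (xs, ys) with
  xs = [x_0,...,x_l], ys = [y_0,...,y_l].\<close>
definition square_path_copies :: "nat set \<Rightarrow> (nat \<Rightarrow> nat \<Rightarrow> bool) \<Rightarrow> nat \<Rightarrow> (nat list \<times> nat list) set" where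
  "square_path_copies V E l = {(xs, ys). length xs = Suc l \<and> length ys = Suc l
     \<and> set xs \<subseteq> V \<and> set ys \<subseteq> V \<and> distinct (xs @ ys)
     \<and> (\<forall>i\<le>l. E (xs ! i) (ys ! i))
     \<and> (\<forall>i\<in>{1..l}. E (xs ! (i - 1)) (xs ! i) \<and> E (ys ! (i - 1)) (ys ! i))}"

definition copy_weight :: "nat set \<Rightarrow> (nat \<Rightarrow> nat \<Rightarrow> bool) \<Rightarrow> nat \<Rightarrow> nat list \<times> nat list \<Rightarrow> real" where
  "copy_weight V E l c = 1 / (\<Prod>i\<in>{1..l}.
      max (real (codeg V E (fst c ! (i - 1)) (snd c ! i))) ((avg_degree V E)^2 / real (card V)))"

definition total_weight :: "nat set \<Rightarrow> (nat \<Rightarrow> nat \<Rightarrow> bool) \<Rightarrow> nat \<Rightarrow> real" where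
  "total_weight V E l = (\<Sum>c\<in>square_path_copies V E l. copy_weight V E l c)"

end

theory Submission
  imports Defs
begin

lemma card_diff_real:
  assumes "finite A" "finite B"
  shows "real (card (A - B)) \<ge> real (card A) - real (card B)"
proof -
  have "card A \<le> card (A - B) + card B"
    by (metis Diff_Diff_Int Un_Diff_Int assms card_Un_le card_mono inf_le2 le_trans add_le_mono order_refl)
  then show ?thesis by linarith
qed

lemma finite_spc:
  assumes "finite V"
  shows "finite (square_path_copies V E k)"
proof -
  have "square_path_copies V E k \<subseteq> {xs. set xs \<subseteq> V \<and> length xs = Suc k} \<times> {xs. set xs \<subseteq> V \<and> length xs = Suc k}"
    unfolding square_path_copies_def by auto
  moreover have "finite ({xs. set xs \<subseteq> V \<and> length xs = Suc k} \<times> {xs. set xs \<subseteq> V \<and> length xs = Suc k})"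
    using finite_lists_length_eq[OF assms] by blast
  ultimately show ?thesis by (rule finite_subset)
qed

lemma copy_weight_nonneg: "copy_weight V E k c \<ge> 0"
  unfolding copy_weight_def
  by (intro divide_nonneg_nonneg prod_nonneg) (auto intro: max.coboundedI1)

lemma total_weight_nonneg: "total_weight V E k \<ge> 0"
  unfolding total_weight_def by (intro sum_nonneg copy_weight_nonneg)

lemma copy_weight_snoc:
  assumes "length xs = Suc k" "length ys = Suc k"
  shows "copy_weight V E (Suc k) (xs @ [x], ys @ [y]) =
    copy_weight V E k (xs, ys) * (1 / max (real (codeg V E (xs ! k) y)) ((avg_degree V E)^2 / real (card V)))"
proof -
  let ?M = "(avg_degree V E)^2 / real (card V)"
  have "(\<Prod>i\<in>{1..k}. max (real (codeg V E ((xs @ [x]) ! (i - 1)) ((ys @ [y]) ! i))) ?M)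
      = (\<Prod>i\<in>{1..k}. max (real (codeg V E (xs ! (i - 1)) (ys ! i))) ?M)"
    using assms by (intro prod.cong) (auto simp: nth_append)
  moreover have "(xs @ [x]) ! k = xs ! k" using assms by (simp add: nth_append)
  moreover have "(ys @ [y]) ! Suc k = y" using assms by (simp add: nth_append)
  ultimately show ?thesis unfolding copy_weight_def by simp
qed

lemma base:
  assumes sg: "simple_graph V E"
  shows "total_weight V E 0 \<ge> (\<Sum>u\<in>V. real (degree V E u))"
proof -
  have fin: "finite V" using sg unfolding simple_graph_def by auto
  let ?S = "Sigma V (nbhd V E)"
  let ?g = "\<lambda>(u,w). ([u],[w])"
  have w1: "\<And>c. copy_weight V E 0 c = 1" unfolding copy_weight_def by simp
  have "total_weight V E 0 = real (card (square_path_copies V E 0))"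
    unfolding total_weight_def w1 by simp
  moreover have "?g ` ?S \<subseteq> square_path_copies V E 0"
    using sg unfolding square_path_copies_def nbhd_def simple_graph_def by auto
  moreover have "inj_on ?g ?S" by (auto simp: inj_on_def)
  moreover have "card ?S = (\<Sum>u\<in>V. degree V E u)"
    using fin by (subst card_SigmaI) (auto simp: degree_def nbhd_def)
  ultimately have "card (square_path_copies V E 0) \<ge> (\<Sum>u\<in>V. degree V E u)"
    by (metis card_image card_mono finite_spc fin)
  then show ?thesis
    using \<open>total_weight V E 0 = _\<close> by (simp flip: of_nat_sum)
qed


lemma ratio_bound:
  fixes c0 X D :: real
  assumes "D > 0" "c0 \<ge> D" "X \<ge> c0 / 2"
  shows "X * (1 / max c0 (128 * D)) \<ge> 1 / 256"
proof (cases "c0 \<ge> 128 * D")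
  case True
  then have "max c0 (128*D) = c0" by simp
  then show ?thesis using assms by (simp add: field_simps)
next
  case False
  then have "max c0 (128*D) = 128*D" by simp
  then show ?thesis using assms by (simp add: field_simps)
qed

lemma step:
  assumes sg: "simple_graph V E" and cl: "clean V E" and n0: "card V > 0"
    and dpos: "avg_degree V E > 0"
    and h1: "real (4*(k+1)) \<le> (avg_degree V E)^2 / (128 * real (card V))"
    and h2: "real (2*(k+1)) \<le> avg_degree V E / 32"
  shows "total_weight V E (Suc k) \<ge> total_weight V E k * (avg_degree V E / 8192)"
proof -
  define d where "d = avg_degree V E"
  define D where "D = d^2 / (128 * real (card V))"
  define M where "M = d^2 / real (card V)"
  have MD: "M = 128 * D" unfolding M_def D_def by simp
  have Dpos: "D > 0" unfolding D_def using dpos n0 d_def by simp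
  have fin: "finite V" using sg unfolding simple_graph_def by auto
  have sym: "\<And>u v. E u v \<Longrightarrow> E v u" and irr: "\<And>u. \<not> E u u"
    and inV: "\<And>u v. E u v \<Longrightarrow> u \<in> V \<and> v \<in> V"
    using sg unfolding simple_graph_def by auto
  let ?P = "square_path_copies V E k"
  let ?P' = "square_path_copies V E (Suc k)"
  define B where "B c = set (fst c) \<union> set (snd c)" for c :: "nat list \<times> nat list"
  define Y where "Y (c::nat list \<times> nat list) = {y \<in> nbhd V E (snd c ! k). D \<le> real (codeg V E (fst c ! k) y)} - B c" for c
  define X where "X (c::nat list \<times> nat list) (y::nat) = (nbhd V E (fst c ! k) \<inter> nbhd V E y) - B c" for c y
  define t where "t (c::nat list \<times> nat list) (y::nat) = 1 / max (real (codeg V E (fst c ! k) y)) M" for c y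
  define S where "S = Sigma ?P (\<lambda>c. Sigma (Y c) (X c))"
  define g where "g = (\<lambda>(c::nat list \<times> nat list, (y::nat, x::nat)). (fst c @ [x], snd c @ [y]))"
  have finnb: "finite (nbhd V E u)" for u using fin unfolding nbhd_def by auto
  have finY: "finite (Y c)" for c unfolding Y_def using finnb by auto
  have finX: "finite (X c y)" for c y unfolding X_def using finnb by auto
  have finP: "finite ?P" by (rule finite_spc[OF fin])
  have finP': "finite ?P'" by (rule finite_spc[OF fin])
  have finS: "finite S" unfolding S_def using finP finY finX by auto
  have gS: "g ` S \<subseteq> ?P'"
  proof
    fix z assume "z \<in> g ` S"
    then obtain xs ys y x where c: "(xs, ys) \<in> ?P" and y: "y \<in> Y (xs, ys)" and x: "x \<in> X (xs, ys) y"
      and z: "z = (xs @ [x], ys @ [y])"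
      unfolding S_def g_def by auto
    from c have lx: "length xs = Suc k" and ly: "length ys = Suc k" and sx: "set xs \<subseteq> V"
      and sy: "set ys \<subseteq> V" and dist: "distinct (xs @ ys)"
      and e1: "\<forall>i\<le>k. E (xs ! i) (ys ! i)"
      and e2: "\<forall>i\<in>{1..k}. E (xs ! (i - 1)) (xs ! i) \<and> E (ys ! (i - 1)) (ys ! i)"
      unfolding square_path_copies_def by auto
    from y have yV: "y \<in> V" and Eyk: "E (ys ! k) y" and yB: "y \<notin> set xs" "y \<notin> set ys"
      unfolding Y_def nbhd_def B_def by auto
    from x have xV: "x \<in> V" and Exk: "E (xs ! k) x" and Eyx: "E y x" and xB: "x \<notin> set xs" "x \<notin> set ys"
      unfolding X_def nbhd_def B_def by auto
    have xy: "x \<noteq> y" using Eyx irr by auto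
    have D1: "distinct ((xs @ [x]) @ (ys @ [y]))" using dist xB yB xy by auto
    have E1: "\<forall>i\<le>Suc k. E ((xs @ [x]) ! i) ((ys @ [y]) ! i)"
    proof (intro allI impI)
      fix i assume "i \<le> Suc k"
      then consider "i \<le> k" | "i = Suc k" by linarith
      then show "E ((xs @ [x]) ! i) ((ys @ [y]) ! i)"
      proof cases
        case 1 then show ?thesis using e1 lx ly by (simp add: nth_append)
      next
        case 2 then show ?thesis using sym[OF Eyx] lx ly by (simp add: nth_append)
      qed
    qed
    have E2: "\<forall>i\<in>{1..Suc k}. E ((xs @ [x]) ! (i - 1)) ((xs @ [x]) ! i) \<and> E ((ys @ [y]) ! (i - 1)) ((ys @ [y]) ! i)"
    proof
      fix i assume i: "i \<in> {1..Suc k}"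
      then consider "i \<in> {1..k}" | "i = Suc k" by fastforce
      then show "E ((xs @ [x]) ! (i - 1)) ((xs @ [x]) ! i) \<and> E ((ys @ [y]) ! (i - 1)) ((ys @ [y]) ! i)"
      proof cases
        case 1
        then have "i - 1 < Suc k" "i < Suc k" by auto
        then show ?thesis using e2 1 lx ly by (simp add: nth_append)
      next
        case 2 then show ?thesis using Exk Eyk lx ly by (simp add: nth_append)
      qed
    qed
    show "z \<in> ?P'" unfolding z square_path_copies_def
      using lx ly sx sy xV yV D1 E1 E2 by auto
  qed
  have injg: "inj_on g S"
    unfolding g_def S_def by (auto simp: inj_on_def)
  have o1: "total_weight V E (Suc k) \<ge> sum (copy_weight V E (Suc k)) (g ` S)"
    unfolding total_weight_def
    by (rule sum_mono2[OF finP' gS]) (simp add: copy_weight_nonneg)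
  have o2: "sum (copy_weight V E (Suc k)) (g ` S) = sum (copy_weight V E (Suc k) \<circ> g) S"
    by (rule sum.reindex[OF injg])
  have o3: "sum (copy_weight V E (Suc k) \<circ> g) S = (\<Sum>c\<in>?P. \<Sum>y\<in>Y c. \<Sum>x\<in>X c y. copy_weight V E k c * t c y)"
  proof -
    have "sum (copy_weight V E (Suc k) \<circ> g) S = (\<Sum>c\<in>?P. \<Sum>yx\<in>Sigma (Y c) (X c). (copy_weight V E (Suc k) \<circ> g) (c, yx))"
      unfolding S_def using sum.Sigma[of ?P "\<lambda>c. Sigma (Y c) (X c)" "\<lambda>c yx. (copy_weight V E (Suc k) \<circ> g) (c, yx)"] finP finY finX
      by (simp add: case_prod_eta)
    also have "\<dots> = (\<Sum>c\<in>?P. \<Sum>y\<in>Y c. \<Sum>x\<in>X c y. (copy_weight V E (Suc k) \<circ> g) (c, (y, x)))"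
    proof (intro sum.cong refl)
      fix c show "(\<Sum>yx\<in>Sigma (Y c) (X c). (copy_weight V E (Suc k) \<circ> g) (c, yx)) = (\<Sum>y\<in>Y c. \<Sum>x\<in>X c y. (copy_weight V E (Suc k) \<circ> g) (c, (y, x)))"
        using sum.Sigma[of "Y c" "X c" "\<lambda>y x. (copy_weight V E (Suc k) \<circ> g) (c, (y, x))"] finY finX by simp
    qed
    also have "\<dots> = (\<Sum>c\<in>?P. \<Sum>y\<in>Y c. \<Sum>x\<in>X c y. copy_weight V E k c * t c y)"
    proof (intro sum.cong refl)
      fix c y x assume "c \<in> ?P"
      then obtain xs ys where c: "c = (xs, ys)" "length xs = Suc k" "length ys = Suc k"
        unfolding square_path_copies_def by auto
      show "(copy_weight V E (Suc k) \<circ> g) (c, (y, x)) = copy_weight V E k c * t c y"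
        unfolding g_def t_def M_def d_def c(1) using copy_weight_snoc[OF c(2,3)] by simp
    qed
    finally show ?thesis .
  qed
  have o4: "(\<Sum>c\<in>?P. \<Sum>y\<in>Y c. \<Sum>x\<in>X c y. copy_weight V E k c * t c y) \<ge> (\<Sum>c\<in>?P. copy_weight V E k c * (d / 8192))"
  proof (rule sum_mono)
    fix c assume cP: "c \<in> ?P"
    then obtain xs ys where c: "c = (xs, ys)" "length xs = Suc k" "length ys = Suc k"
      and dist: "distinct (xs @ ys)" and ek: "E (xs ! k) (ys ! k)"
      unfolding square_path_copies_def by auto
    have cardB: "real (card (B c)) \<le> real (2 * (k+1))"
    proof -
      have "card (B c) \<le> card (set xs) + card (set ys)" unfolding B_def c(1) by (simp add: card_Un_le)
      also have "\<dots> \<le> 2 * (k+1)" using c(2,3) by (metis List.card_set length_remdups_leq add_le_mono mult_2 Suc_eq_plus1)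
      finally show ?thesis by linarith
    qed
    have finB: "finite (B c)" unfolding B_def by auto
    let ?A = "{y \<in> nbhd V E (snd c ! k). D \<le> real (codeg V E (fst c ! k) y)}"
    have cardA: "real (card ?A) \<ge> d / 16"
      using cl sym[OF ek] unfolding clean_def c(1) D_def d_def by auto
    have finA: "finite ?A" using finnb by auto
    have cardY: "real (card (Y c)) \<ge> d / 32"
      using card_diff_real[OF finA finB] cardA cardB h2 unfolding Y_def d_def by linarith
    have inner: "(\<Sum>x\<in>X c y. copy_weight V E k c * t c y) \<ge> copy_weight V E k c * (1/256)"
      if y: "y \<in> Y c" for y
    proof -
      define c0 where "c0 = real (codeg V E (fst c ! k) y)"
      have c0D: "c0 \<ge> D" using y unfolding Y_def c0_def by auto
      have "real (card (X c y)) \<ge> c0 - real (2*(k+1))"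
        using card_diff_real[OF _ finB, of "nbhd V E (fst c ! k) \<inter> nbhd V E y"] finnb cardB
        unfolding X_def c0_def codeg_def by auto
      then have Xb: "real (card (X c y)) \<ge> c0 / 2" using c0D h1 unfolding D_def d_def by linarith
      have "real (card (X c y)) * t c y \<ge> 1/256"
        unfolding t_def MD c0_def[symmetric] by (rule ratio_bound[OF Dpos c0D Xb])
      then have "copy_weight V E k c * (real (card (X c y)) * t c y) \<ge> copy_weight V E k c * (1/256)"
        by (intro mult_left_mono copy_weight_nonneg)
      then show ?thesis by (simp add: mult.commute mult.left_commute)
    qed
    have s1: "(\<Sum>y\<in>Y c. \<Sum>x\<in>X c y. copy_weight V E k c * t c y) \<ge> (\<Sum>y\<in>Y c. copy_weight V E k c * (1/256))"
      by (rule sum_mono) (rule inner)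
    have s2: "(\<Sum>y\<in>Y c. copy_weight V E k c * (1/256)) = real (card (Y c)) * copy_weight V E k c / 256"
      by simp
    have s3: "real (card (Y c)) * copy_weight V E k c / 256 \<ge> (d/32) * copy_weight V E k c / 256"
      by (intro divide_right_mono mult_right_mono cardY copy_weight_nonneg) auto
    show "(\<Sum>y\<in>Y c. \<Sum>x\<in>X c y. copy_weight V E k c * t c y) \<ge> copy_weight V E k c * (d / 8192)"
    proof -
      have "copy_weight V E k c * (d / 8192) = (d/32) * copy_weight V E k c / 256" by simp
      then show ?thesis using s1 s2 s3 by linarith
    qed
  qed
  have "(\<Sum>c\<in>?P. copy_weight V E k c * (d / 8192)) = total_weight V E k * (avg_degree V E / 8192)"
    unfolding total_weight_def d_def by (simp add: sum_distrib_right)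
  then show ?thesis using o1 o2 o3 o4 by linarith
qed


lemma induct_bound:
  assumes sg: "simple_graph V E" and cl: "clean V E" and n0: "card V > 0"
    and dpos: "avg_degree V E > 0"
    and h1: "real (4*l) \<le> (avg_degree V E)^2 / (128 * real (card V))"
    and h2: "real (2*l) \<le> avg_degree V E / 32"
  shows "k \<le> l \<Longrightarrow> total_weight V E k \<ge> real (card V) * avg_degree V E * (avg_degree V E / 8192)^k"
proof (induction k)
  case 0
  have "(\<Sum>u\<in>V. real (degree V E u)) = real (card V) * avg_degree V E"
    using n0 unfolding avg_degree_def by simp
  then show ?case using base[OF sg] by simp
next
  case (Suc k)
  have a1: "real (4*(k+1)) \<le> (avg_degree V E)^2 / (128 * real (card V))" using h1 Suc.prems by simp
  have a2: "real (2*(k+1)) \<le> avg_degree V E / 32" using h2 Suc.prems by simp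
  have IH: "total_weight V E k \<ge> real (card V) * avg_degree V E * (avg_degree V E / 8192)^k"
    using Suc by simp
  have "total_weight V E k * (avg_degree V E / 8192) \<ge>
      real (card V) * avg_degree V E * (avg_degree V E / 8192)^k * (avg_degree V E / 8192)"
    by (rule mult_right_mono[OF IH]) (use dpos in simp)
  moreover have "real (card V) * avg_degree V E * (avg_degree V E / 8192)^k * (avg_degree V E / 8192)
      = real (card V) * avg_degree V E * (avg_degree V E / 8192)^Suc k" by simp
  ultimately show ?case using step[OF sg cl n0 dpos a1 a2] by linarith
qed

lemma deg_le: assumes "simple_graph V E" shows "avg_degree V E \<le> real (card V)"
proof -
  have fin: "finite V" using assms unfolding simple_graph_def by auto
  have "\<And>u. degree V E u \<le> card V" unfolding degree_def nbhd_def
    using fin by (intro card_mono) auto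
  then have "(\<Sum>u\<in>V. real (degree V E u)) \<le> (\<Sum>u\<in>V. real (card V))"
    by (intro sum_mono) simp
  then have "(\<Sum>u\<in>V. real (degree V E u)) \<le> real (card V) * real (card V)" by simp
  then show ?thesis unfolding avg_degree_def
    by (cases "card V = 0") (simp_all add: divide_le_eq)
qed

theorem lemma5p3:
  fixes l :: nat
  assumes "l \<ge> 2"
  shows "\<exists>C c :: real. c > 0 \<and>
    (\<forall>(V :: nat set) E. simple_graph V E \<longrightarrow> clean V E \<longrightarrow>
       avg_degree V E \<ge> C * sqrt (real (card V)) \<longrightarrow>
       total_weight V E l \<ge> c * real (card V) * (avg_degree V E) ^ (l + 1))"
proof (intro exI conjI allI impI)
  show "(1 / 8192^l :: real) > 0" by simp
  fix V :: "nat set" and E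
  assume sg: "simple_graph V E" and cl: "clean V E"
    and dC: "avg_degree V E \<ge> sqrt (real (512 * l)) * sqrt (real (card V))"
  define d where "d = avg_degree V E"
  define n where "n = real (card V)"
  show "total_weight V E l \<ge> (1 / 8192^l) * real (card V) * (avg_degree V E) ^ (l + 1)"
  proof (cases "card V = 0")
    case True
    then show ?thesis using total_weight_nonneg by simp
  next
    case False
    then have n0: "card V > 0" by simp
    have npos: "n > 0" using n0 n_def by simp
    have dsq: "d \<ge> sqrt (512 * l * n)" using dC unfolding d_def n_def by (simp add: real_sqrt_mult)
    have sqpos: "sqrt (512 * l * n) > 0" using npos assms by simp
    have dpos: "d > 0" using dsq sqpos by linarith
    have "d^2 \<ge> (sqrt (512 * l * n))^2" using dsq sqpos by (intro power_mono) auto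
    then have d2: "d^2 \<ge> 512 * l * n" using npos by simp
    have dn: "d \<le> n" using deg_le[OF sg] unfolding d_def n_def .
    have h1: "real (4*l) \<le> d^2 / (128 * n)" using d2 npos by (simp add: field_simps)
    have "d * n \<ge> 512 * l * n"
    proof -
      have "d * n \<ge> d * d" using dn dpos by (intro mult_left_mono) auto
      then show ?thesis using d2 by (simp add: power2_eq_square)
    qed
    then have "d \<ge> 512 * l" using npos by simp
    then have h2: "real (2*l) \<le> d / 32" by simp
    have "total_weight V E l \<ge> n * d * (d / 8192)^l"
      using induct_bound[OF sg cl n0 _ _ _ order_refl] dpos h1 h2 unfolding d_def n_def by simp
    moreover have "n * d * (d / 8192)^l = (1 / 8192^l) * n * d ^ (l + 1)"
      by (simp add: power_divide field_simps)
    ultimately show ?thesis unfolding d_def n_def by simp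
  qed
qed

end
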